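(* Let $n\ge m\ge 1$. Let $L^\sharp_m$ be an $m$-th order Lagrangian (possibly singular and explicitly time dependent). Let $W_{n-1}$ be an arbitrary smooth function of $q^{(0)i},\dots,q^{(n-1)i}$ and $t$. Let $L_n$ be the $n$-th order Lagrangian $$L_n=L^\sharp_m+\frac{d}{dt}W_{n-1}.$$ Then $L_n$ and $L^\sharp_m$ are quantum mechanically equivalent. That is, they lead to the same quantum mechanics, with equivalence understood as the equivalence relation generated by the correspondence of Proposition 1.
   Context: Ostrogradski formalism: for an $N$-th order Lagrangian with $q^{(I)i}=d^Iq^i/dt^I$, the canonical variables are $q^{Ii}=q^{(I)i}$ and $p_{Ii}=\sum_{K=I+1}^{N}(-d/dt)^{K-I-1}\partial L/\partial q^{(K)i}$, for $I=0,\dots,N-1$. Quantization: all constraints are assumed first class. The wave function $\psi(q^{Ii},t)$ obeys the Schrödinger equation $i\hbar\partial_t\psi=\hat H\psi$, with $\hat p_{Ii}=-i\hbar\partial/\partial q^{Ii}$, and satisfies $\hat\gamma\psi=0$ for each constraint. Hamiltonians and constraints are assumed polynomial in the momenta, with a fixed operator ordering. Basic correspondence (Proposition 1): let $L^\sharp$ have order $N-1\ge1$ and $L=L^\sharp+dW/dt$ with $W=W(q^{(0)},\dots,q^{(N-1)},t)$. Treat $L$ by the extended formalism, with Hamiltonian $H^\sharp(\mathbf q_\sharp,\mathbf p_{\sharp}-\partial W/\partial\mathbf q_\sharp,t)-\partial W/\partial t$ and constraints $p_{N-1,i}-\partial W/\partial q^{N-1,i}$ and $\gamma^\sharp_a(\mathbf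 q_\sharp,\mathbf p_\sharp-\partial W/\partial\mathbf q_\sharp,t)$, where $\mathbf q_\sharp=(q^{Ai})_{A\le N-2}$. Then the physical wave functions of $L$ are exactly $\psi^\sharp(\mathbf q_\sharp,t)e^{iW/\hbar}$, with $\psi^\sharp$ ranging over the physical wave functions of $L^\sharp$. Such $L$ and $L^\sharp$ are called quantum mechanically equivalent, and "quantum mechanically equivalent" in general means related by a finite chain of such correspondences (in either direction). *)

theory Defs
  imports "HOL-Analysis.Analysis"
begin

text \<open>Jet coordinates: a point of (infinite) jet space is a sequence
  x :: nat => real^'d, where x I represents the vector (q^{(I)i})_i; the finite
  type 'd indexes the configuration coordinates i. Functions on jet space also
  depend on the time t.\<close>

type_synonym 'd jetfun = "(nat \<Rightarrow> real^'d) \<Rightarrow> real \<Rightarrow> real"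

definition depends_upto :: "nat \<Rightarrow> ('d::finite) jetfun \<Rightarrow> bool" where
  "depends_upto K F \<longleftrightarrow> (\<forall>x y t. (\<forall>I\<le>K. x I = y I) \<longrightarrow> F x t = F y t)"

definition dir_deriv :: "(nat \<Rightarrow> real^'d) \<times> real \<Rightarrow> ('d::finite) jetfun \<Rightarrow> 'd jetfun" where
  "dir_deriv d F = (\<lambda>x t. deriv (\<lambda>s. F (\<lambda>I. x I + s *\<^sub>R fst d I) (t + s * snd d)) 0)"

definition iter_dir_deriv :: "((nat \<Rightarrow> real^'d) \<times> real) list \<Rightarrow> ('d::finite) jetfun \<Rightarrow> 'd jetfun" where
  "iter_dir_deriv ds F = foldr dir_deriv ds F"

text \<open>Smoothness (C^infinity): all iterated directional derivatives exist
  everywhere and are continuous (product topology on jet space; for functions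
  depending on finitely many jet coordinates this is ordinary C^infinity).\<close>
definition smooth_jet :: "('d::finite) jetfun \<Rightarrow> bool" where
  "smooth_jet F \<longleftrightarrow>
     (\<forall>ds x t. continuous (at (x, t)) (\<lambda>p. iter_dir_deriv ds F (fst p) (snd p)) \<and>
        (\<forall>d. (\<lambda>s. iter_dir_deriv ds F (\<lambda>I. x I + s *\<^sub>R fst d I) (t + s * snd d))
               differentiable (at 0)))"

definition partial_q :: "nat \<Rightarrow> 'd \<Rightarrow> ('d::finite) jetfun \<Rightarrow> 'd jetfun" where
  "partial_q I i F = (\<lambda>x t. deriv (\<lambda>s. F (x(I := x I + s *\<^sub>R axis i 1)) t) 0)"

definition partial_t :: "('d::finite) jetfun \<Rightarrow> 'd jetfun" where
  "partial_t F = (\<lambda>x t. deriv (\<lambda>s. F x s) t)"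

definition total_deriv :: "nat \<Rightarrow> ('d::finite) jetfun \<Rightarrow> 'd jetfun" where
  "total_deriv K W = (\<lambda>x t. partial_t W x t +
      (\<Sum>I\<le>K. \<Sum>i\<in>UNIV. partial_q I i W x t * (x (Suc I) $ i)))"

definition lagrangian :: "nat \<Rightarrow> ('d::finite) jetfun \<Rightarrow> bool" where
  "lagrangian N L \<longleftrightarrow> depends_upto N L \<and> smooth_jet L"

text \<open>Lagrangians are tagged with the order N used in the Ostrogradski
  (extended) formalism.\<close>
definition basic_corresp :: "nat \<times> ('d::finite) jetfun \<Rightarrow> nat \<times> 'd jetfun \<Rightarrow> bool" where
  "basic_corresp A B \<longleftrightarrow>
     (case A of (N, L) \<Rightarrow> case B of (N', Ls) \<Rightarrow>
        N' + 1 = N \<and> N' \<ge> 1 \<and> depends_upto N' Ls \<and>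
        (\<exists>W. depends_upto N' W \<and> smooth_jet W \<and>
             (\<forall>x t. L x t = Ls x t + total_deriv N' W x t)))"

definition qm_equiv :: "nat \<times> ('d::finite) jetfun \<Rightarrow> nat \<times> 'd jetfun \<Rightarrow> bool" where
  "qm_equiv = equivclp basic_corresp"

end

theory Submission
  imports Defs
begin

lemma depends_mono: "depends_upto K F \<Longrightarrow> K \<le> K' \<Longrightarrow> depends_upto K' F"
  unfolding depends_upto_def by auto

lemma depends_zero: "depends_upto K (\<lambda>x t. 0)"
  unfolding depends_upto_def by auto

lemma total_deriv_zero: "total_deriv K (\<lambda>x t. 0) x t = 0"
  unfolding total_deriv_def partial_t_def partial_q_def by simp

lemma iter_zero: "iter_dir_deriv ds (\<lambda>x t. 0) = (\<lambda>x t. (0::real))"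
  unfolding iter_dir_deriv_def
  by (induction ds) (auto simp: dir_deriv_def)

lemma smooth_zero: "smooth_jet (\<lambda>x t. 0)"
  unfolding smooth_jet_def iter_zero by simp

lemma depends_total:
  assumes "depends_upto K W"
  shows "depends_upto (Suc K) (total_deriv K W)"
  unfolding depends_upto_def
proof (intro allI impI)
  fix x y :: "nat \<Rightarrow> real^'a" and t
  assume h: "\<forall>I\<le>Suc K. x I = y I"
  have "partial_t W x t = partial_t W y t"
  proof -
    have "(\<lambda>s. W x s) = (\<lambda>s. W y s)" using assms h unfolding depends_upto_def by auto
    thus ?thesis unfolding partial_t_def by simp
  qed
  moreover have "partial_q I i W x t = partial_q I i W y t" if "I \<le> K" for I i
  proof -
    have "(\<lambda>s. W (x(I := x I + s *\<^sub>R axis i 1)) t) = (\<lambda>s. W (y(I := y I + s *\<^sub>R axis i 1)) t)"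
    proof
      fix s
      show "W (x(I := x I + s *\<^sub>R axis i 1)) t = W (y(I := y I + s *\<^sub>R axis i 1)) t"
      proof -
        have "\<forall>J\<le>K. (x(I := x I + s *\<^sub>R axis i 1)) J = (y(I := y I + s *\<^sub>R axis i 1)) J"
          using h that by auto
        thus ?thesis using assms unfolding depends_upto_def by blast
      qed
    qed
    thus ?thesis unfolding partial_q_def by simp
  qed
  moreover have "x (Suc I) = y (Suc I)" if "I \<le> K" for I using h that by auto
  ultimately show "total_deriv K W x t = total_deriv K W y t"
    unfolding total_deriv_def by (auto intro!: sum.cong)
qed

lemma partial_q_top:
  assumes "depends_upto K W"
  shows "partial_q (Suc K) i W x t = 0"
proof -
  have "(\<lambda>s. W (x(Suc K := x (Suc K) + s *\<^sub>R axis i 1)) t) = (\<lambda>s. W x t)"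
    using assms unfolding depends_upto_def by auto
  thus ?thesis unfolding partial_q_def by simp
qed

lemma total_deriv_ext:
  assumes "depends_upto K W"
  shows "total_deriv (Suc K) W x t = total_deriv K W x t"
proof -
  have "{..Suc K} = insert (Suc K) {..K}" by auto
  thus ?thesis unfolding total_deriv_def using partial_q_top[OF assms]
    by simp
qed

lemma chain:
  assumes "depends_upto m Ls" "1 \<le> m"
  shows "m \<le> k \<Longrightarrow> qm_equiv (k, Ls) (m, Ls)"
proof (induction k rule: dec_induct)
  case base
  then show ?case unfolding qm_equiv_def by simp
next
  case (step k)
  have "basic_corresp (Suc k, Ls) (k, Ls)"
    unfolding basic_corresp_def using step assms
    by (auto intro!: exI[of _ "\<lambda>x t. 0"] depends_mono[OF assms(1)] depends_zero smooth_zero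
        simp: total_deriv_zero)
  hence "qm_equiv (Suc k, Ls) (k, Ls)" unfolding qm_equiv_def by blast
  with step.IH show ?case unfolding qm_equiv_def by (meson equivclp_trans)
qed

theorem theorem1:
  fixes n m :: nat
    and Ls :: "('d::finite) jetfun"
    and W :: "'d jetfun"
  assumes "1 \<le> m" and "m \<le> n"
    and "lagrangian m Ls"
    and "depends_upto (n - 1) W" and "smooth_jet W"
  shows "qm_equiv (n, \<lambda>x t. Ls x t + total_deriv (n - 1) W x t) (m, Ls)"
proof -
  define L where "L = (\<lambda>x t. Ls x t + total_deriv (n - 1) W x t)"
  have dLs: "depends_upto m Ls" using assms(3) unfolding lagrangian_def by simp
  obtain k where nk: "n = Suc k" using assms(1,2) by (cases n) auto
  have dW: "depends_upto k W" using assms(4) nk by simp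
  have "total_deriv n W x t = total_deriv (n - 1) W x t" for x t
    using total_deriv_ext[OF dW] nk by simp
  hence c1: "basic_corresp (Suc n, L) (n, Ls)"
    unfolding basic_corresp_def L_def using assms nk dLs dW
    by (auto intro!: exI[of _ W] depends_mono[OF dLs] depends_mono[OF dW])
  have dL: "depends_upto n L"
  proof -
    have "depends_upto n (total_deriv (n - 1) W)" using depends_total[OF dW] nk by simp
    moreover have "depends_upto n Ls" using depends_mono[OF dLs assms(2)] .
    ultimately show ?thesis unfolding L_def depends_upto_def by metis
  qed
  have c2: "basic_corresp (Suc n, L) (n, L)"
    unfolding basic_corresp_def using assms nk dL
    by (auto intro!: exI[of _ "\<lambda>x t. 0"] depends_zero smooth_zero simp: total_deriv_zero)
  have "qm_equiv (n, L) (n, Ls)"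
    using c1 c2 unfolding qm_equiv_def by (meson equivclp_sym equivclp_trans r_into_equivclp)
  moreover have "qm_equiv (n, Ls) (m, Ls)" using chain[OF dLs assms(1,2)] .
  ultimately show ?thesis unfolding L_def qm_equiv_def by (meson equivclp_trans)
qed

end
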